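(* Let $\mathcal{G}$ be a compact group with normalized Haar measure $\lambda$ acting measurably on $\mathcal{X}$, let $\mathcal{P}$ be a $\mathcal{G}$-invariant distribution on $\mathcal{X}\times\mathcal{Y}$, let $\ell$ be the binary 0-1 loss, let $C>0$, and let $P$ be any distribution on a class $\mathcal{F}$ of functions $\mathcal{X}\to\mathcal{Y}$. Then $$\mathbb{E}_{f\sim P}\Big[\mathbb{E}_{\mathcal{D}^n\sim\mathcal{P}^n}\big[e^{n\mathscr{D}_C(\hat{R}_{\mathrm{aug}}(f,\mathcal{D}^n),R(f))}\big]\Big]\le\mathbb{E}_{f\sim P}\Big[\mathbb{E}_{\mathcal{D}^n\sim\mathcal{P}^n}\big[e^{n\mathscr{D}_C(\hat{R}(f,\mathcal{D}^n),R(f))}\big]\Big]=1$$ and $$\mathbb{E}_{f\sim P}\Big[\mathbb{E}_{\mathcal{D}^n\sim\mathcal{P}^n}\big[e^{n\mathscr{D}_C(\hat{R}^{(m)}_{\mathrm{aug}}(f,\mathcal{D}^n),R(f))}\big]\Big]\le\mathbb{E}_{f\sim P}\Big[\mathbb{E}_{\mathcal{D}^n\sim\mathcal{P}^n}\big[e^{n\mathscr{D}_C(\hat{R}(f,\mathcal{D}^n),R(f))}\big]\Big]=1.$$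
   Context: $\mathcal{P}$ is $\mathcal{G}$-invariant if $(gX,Y)\overset{d}{=}(X,Y)$ for all $g\in\mathcal{G}$. $\mathcal{D}^n=((X_i,Y_i))_{i=1}^n$ i.i.d. from $\mathcal{P}$. $R(f)=\mathbb{E}_{\mathcal{P}}[\ell(f(X),Y)]$, $\hat{R}(f,\mathcal{D}^n)=\frac1n\sum_i\ell(f(X_i),Y_i)$, $\hat{R}_{\mathrm{aug}}(f,\mathcal{D}^n)=\frac1n\sum_i\mathbb{E}_{G\sim\lambda}[\ell(f(GX_i),Y_i)]$, and the Monte Carlo augmented risk is $\hat{R}^{(m)}_{\mathrm{aug}}(f,\mathcal{D}^n)=\frac1{nm}\sum_{i=1}^n\sum_{j=1}^m\ell(f(G_{ij}X_i),Y_i)$ with $(G_{ij})$ i.i.d. from $\lambda$ independent of the data; in the expression involving $\hat{R}^{(m)}_{\mathrm{aug}}$ the inner expectation is taken jointly over $\mathcal{D}^n$ and the $G_{ij}$. For $q,p\in(0,1)$, $\mathscr{D}_C(q,p)=-\log(1-p(1-e^{-C}))-Cq$. *)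

theory Defs
  imports "HOL-Probability.Probability" "HOL-Algebra.Group_Action"
begin

definition compact_group_with_haar ::
  "('g::t2_space, 'b) monoid_scheme \<Rightarrow> 'g measure \<Rightarrow> bool" where
  "compact_group_with_haar Gr lam \<longleftrightarrow>
     group Gr \<and> compact (carrier Gr) \<and>
     continuous_on (carrier Gr \<times> carrier Gr) (\<lambda>(a, b). a \<otimes>\<^bsub>Gr\<^esub> b) \<and>
     continuous_on (carrier Gr) (\<lambda>a. inv\<^bsub>Gr\<^esub> a) \<and>
     prob_space lam \<and> space lam = carrier Gr \<and>
     sets lam = sets (restrict_space borel (carrier Gr)) \<and>
     (\<forall>g\<in>carrier Gr. \<forall>A\<in>sets lam.
        measure lam ((\<lambda>a. g \<otimes>\<^bsub>Gr\<^esub> a) ` A) = measure lam A)"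

definition loss01 :: "bool \<Rightarrow> bool \<Rightarrow> real" where
  "loss01 yhat y = (if yhat = y then 0 else 1)"

definition risk :: "('x \<times> bool) measure \<Rightarrow> ('x \<Rightarrow> bool) \<Rightarrow> real" where
  "risk PP f = (\<integral>z. loss01 (f (fst z)) (snd z) \<partial>PP)"

definition emp_risk :: "nat \<Rightarrow> ('x \<Rightarrow> bool) \<Rightarrow> (nat \<Rightarrow> 'x \<times> bool) \<Rightarrow> real" where
  "emp_risk n f D = (1 / real n) * (\<Sum>i<n. loss01 (f (fst (D i))) (snd (D i)))"

definition aug_risk ::
  "'g measure \<Rightarrow> ('g \<Rightarrow> 'x \<Rightarrow> 'x) \<Rightarrow> nat \<Rightarrow> ('x \<Rightarrow> bool) \<Rightarrow> (nat \<Rightarrow> 'x \<times> bool) \<Rightarrow> real" where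
  "aug_risk lam act n f D =
     (1 / real n) * (\<Sum>i<n. \<integral>g. loss01 (f (act g (fst (D i)))) (snd (D i)) \<partial>lam)"

definition mc_aug_risk ::
  "('g \<Rightarrow> 'x \<Rightarrow> 'x) \<Rightarrow> nat \<Rightarrow> nat \<Rightarrow> ('x \<Rightarrow> bool) \<Rightarrow> (nat \<Rightarrow> 'x \<times> bool)
     \<Rightarrow> (nat \<times> nat \<Rightarrow> 'g) \<Rightarrow> real" where
  "mc_aug_risk act n m f D Gs =
     (1 / (real n * real m)) *
       (\<Sum>i<n. \<Sum>j<m. loss01 (f (act (Gs (i, j)) (fst (D i)))) (snd (D i)))"

definition DC :: "real \<Rightarrow> real \<Rightarrow> real \<Rightarrow> real" where
  "DC C q p = - ln (1 - p * (1 - exp (- C))) - C * q"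

end

theory Submission
  imports Defs
begin

lemma chord:
  fixes C t :: real
  assumes "0 \<le> t" "t \<le> 1"
  shows "exp (- C * t) \<le> 1 - (1 - exp (- C)) * t"
proof -
  have "exp ((1 - t) *\<^sub>R 0 + t *\<^sub>R (- C)) \<le> (1 - t) * exp 0 + t * exp (- C)"
    using convex_onD[OF exp_convex, of t 0 "-C"] assms by simp
  then show ?thesis by (simp add: algebra_simps)
qed

lemma prod_mono_ennreal:
  fixes f g :: "'i \<Rightarrow> ennreal"
  shows "(\<And>i. i \<in> A \<Longrightarrow> f i \<le> g i) \<Longrightarrow> prod f A \<le> prod g A"
  by (induction A rule: infinite_finite_induct) (auto intro!: mult_mono)

lemma key_eq:
  fixes PP :: "'z measure" and w :: "nat \<Rightarrow> 'z \<Rightarrow> real"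
  assumes PP: "prob_space PP" and C: "C > 0" and p: "0 \<le> p" "p \<le> 1" and n: "n > 0"
    and w_meas: "\<And>i. i < n \<Longrightarrow> w i \<in> borel_measurable PP"
  shows "(\<integral>\<^sup>+ D. ennreal (exp (real n * DC C ((1 / real n) * (\<Sum>i<n. w i (D i))) p))
            \<partial>(\<Pi>\<^sub>M i\<in>{..<n}. PP))
       = ennreal (1 / (1 - (1 - exp (- C)) * p) ^ n) *
         (\<Prod>i<n. \<integral>\<^sup>+ z. ennreal (exp (- C * w i z)) \<partial>PP)"
proof -
  define c where "c = 1 - exp (- C)"
  define a where "a = 1 - c * p"
  have c01: "0 < c" "c < 1" using C by (auto simp: c_def)
  have a_pos: "a > 0"
  proof -
    have "c * p \<le> c" by (rule mult_left_le) (use c01 p in auto)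
    then show ?thesis using c01 unfolding a_def by linarith
  qed
  interpret PS: product_sigma_finite "\<lambda>_. PP"
    unfolding product_sigma_finite_def
    using PP prob_space_imp_sigma_finite by blast
  have pt: "exp (real n * DC C ((1 / real n) * (\<Sum>i<n. w i (D i))) p)
       = (1 / a ^ n) * (\<Prod>i<n. exp (- C * w i (D i)))" for D
  proof -
    have "real n * DC C ((1 / real n) * (\<Sum>i<n. w i (D i))) p
        = - (real n * ln a) + (\<Sum>i<n. - C * w i (D i))"
      using n unfolding DC_def a_def c_def
      by (simp add: algebra_simps sum_distrib_left sum_negf)
    then have "exp (real n * DC C ((1 / real n) * (\<Sum>i<n. w i (D i))) p)
       = exp (- (real n * ln a)) * exp (\<Sum>i<n. - C * w i (D i))"
      by (simp only: exp_add)
    also have "exp (- (real n * ln a)) = 1 / a ^ n"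
      using a_pos by (simp add: exp_minus exp_of_nat_mult field_simps)
    also have "exp (\<Sum>i<n. - C * w i (D i)) = (\<Prod>i<n. exp (- C * w i (D i)))"
      by (simp add: exp_sum)
    finally show ?thesis .
  qed
  have wm': "(\<lambda>z. ennreal (exp (- C * w i z))) \<in> borel_measurable PP" if "i \<in> {..<n}" for i
  proof -
    have a1: "(\<lambda>z. - C * w i z) \<in> borel_measurable PP"
      using w_meas that by (intro borel_measurable_times borel_measurable_const) auto
    have a2: "(\<lambda>z. exp (- C * w i z)) \<in> borel_measurable PP"
      using measurable_compose[OF a1 borel_measurable_exp] by (simp only:)
    show ?thesis using measurable_compose[OF a2 measurable_ennreal] by (simp only:)
  qed
  have wm2: "(\<lambda>D. ennreal (exp (- C * w i (D i)))) \<in> borel_measurable (\<Pi>\<^sub>M i\<in>{..<n}. PP)"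
    if "i \<in> {..<n}" for i
    using measurable_compose[OF measurable_component_singleton[OF that] wm'[OF that]] by (simp only:)
  have pm: "(\<lambda>D. \<Prod>i<n. ennreal (exp (- C * w i (D i)))) \<in> borel_measurable (\<Pi>\<^sub>M i\<in>{..<n}. PP)"
    by (rule borel_measurable_prod_ennreal) (rule wm2)
  have "(\<integral>\<^sup>+ D. ennreal (exp (real n * DC C ((1 / real n) * (\<Sum>i<n. w i (D i))) p))
            \<partial>(\<Pi>\<^sub>M i\<in>{..<n}. PP))
      = (\<integral>\<^sup>+ D. ennreal (1 / a ^ n) * (\<Prod>i<n. ennreal (exp (- C * w i (D i))))
            \<partial>(\<Pi>\<^sub>M i\<in>{..<n}. PP))"
  proof -
    have pe: "ennreal (1 / a ^ n * (\<Prod>i<n. exp (- C * w i (D i))))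
        = ennreal (1 / a ^ n) * (\<Prod>i<n. ennreal (exp (- C * w i (D i))))" for D
    proof -
      have "ennreal (1 / a ^ n * (\<Prod>i<n. exp (- C * w i (D i))))
          = ennreal (1 / a ^ n) * ennreal (\<Prod>i<n. exp (- C * w i (D i)))"
        by (rule ennreal_mult) (use a_pos in \<open>auto intro: prod_nonneg\<close>)
      also have "ennreal (\<Prod>i<n. exp (- C * w i (D i))) = (\<Prod>i<n. ennreal (exp (- C * w i (D i))))"
        by (rule prod_ennreal[symmetric]) simp
      finally show ?thesis .
    qed
    show ?thesis unfolding pt pe ..
  qed
  also have "\<dots> = ennreal (1 / a ^ n) * (\<integral>\<^sup>+ D. (\<Prod>i<n. ennreal (exp (- C * w i (D i))))
            \<partial>(\<Pi>\<^sub>M i\<in>{..<n}. PP))"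
    by (rule nn_integral_cmult[OF pm])
  also have "(\<integral>\<^sup>+ D. (\<Prod>i<n. ennreal (exp (- C * w i (D i)))) \<partial>(\<Pi>\<^sub>M i\<in>{..<n}. PP))
     = (\<Prod>i<n. \<integral>\<^sup>+ z. ennreal (exp (- C * w i z)) \<partial>PP)"
    using PS.product_nn_integral_prod[of "{..<n}" "\<lambda>i z. ennreal (exp (- C * w i z))"] wm' by simp
  finally show ?thesis unfolding a_def c_def .
qed

lemma factor_bound:
  fixes PP :: "'z measure" and v :: "'z \<Rightarrow> real"
  assumes PP: "prob_space PP"
    and v_meas: "v \<in> borel_measurable PP"
    and v01: "\<And>z. z \<in> space PP \<Longrightarrow> 0 \<le> v z \<and> v z \<le> 1"
  shows "(\<integral>\<^sup>+ z. ennreal (exp (- C * v z)) \<partial>PP)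
       \<le> ennreal (1 - (1 - exp (- C)) * (\<integral>z. v z \<partial>PP))"
    and "(\<And>z. z \<in> space PP \<Longrightarrow> v z = 0 \<or> v z = 1) \<Longrightarrow>
       (\<integral>\<^sup>+ z. ennreal (exp (- C * v z)) \<partial>PP)
       = ennreal (1 - (1 - exp (- C)) * (\<integral>z. v z \<partial>PP))"
proof -
  interpret prob_space PP by (rule PP)
  define c where "c = 1 - exp (- C)"
  have intv: "integrable PP v"
    by (rule integrable_const_bound[where B=1]) (use v01 v_meas in auto)
  have int2: "integrable PP (\<lambda>z. 1 - c * v z)"
    using intv by auto
  have eq: "(\<integral>\<^sup>+ z. ennreal (1 - c * v z) \<partial>PP) = ennreal (1 - c * (\<integral>z. v z \<partial>PP))"
  proof -
    have nn: "0 \<le> 1 - c * v z" if z: "z \<in> space PP" for z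
    proof -
      have c1: "c < 1" by (simp add: c_def)
      have "c * v z \<le> 1"
      proof (cases "c \<le> 0")
        case True then show ?thesis using v01[OF z] by (simp add: mult_nonpos_nonneg order_trans[of _ 0])
      next
        case False
        then have "c * v z \<le> c" by (intro mult_left_le) (use v01[OF z] in auto)
        then show ?thesis using c1 by linarith
      qed
      then show ?thesis by linarith
    qed
    have "(\<integral>\<^sup>+ z. ennreal (1 - c * v z) \<partial>PP) = ennreal (\<integral>z. 1 - c * v z \<partial>PP)"
      by (rule nn_integral_eq_integral[OF int2]) (use nn in \<open>auto intro: AE_I2\<close>)
    also have "(\<integral>z. 1 - c * v z \<partial>PP) = 1 - c * (\<integral>z. v z \<partial>PP)"
      using intv by (simp add: prob_space)
    finally show ?thesis .
  qed
  show "(\<integral>\<^sup>+ z. ennreal (exp (- C * v z)) \<partial>PP)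
       \<le> ennreal (1 - (1 - exp (- C)) * (\<integral>z. v z \<partial>PP))"
    unfolding c_def[symmetric] eq[symmetric]
    apply (rule nn_integral_mono)
    apply (rule ennreal_leI)
    using chord v01 unfolding c_def by blast
  assume b: "\<And>z. z \<in> space PP \<Longrightarrow> v z = 0 \<or> v z = 1"
  show "(\<integral>\<^sup>+ z. ennreal (exp (- C * v z)) \<partial>PP)
       = ennreal (1 - (1 - exp (- C)) * (\<integral>z. v z \<partial>PP))"
    unfolding c_def[symmetric] eq[symmetric]
  proof (rule nn_integral_cong)
    fix x assume x: "x \<in> space PP"
    from b[OF x] show "ennreal (exp (- C * v x)) = ennreal (1 - c * v x)"
      unfolding c_def by auto
  qed
qed

lemma key_le:
  fixes PP :: "'z measure" and w :: "nat \<Rightarrow> 'z \<Rightarrow> real"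
  assumes PP: "prob_space PP" and C: "C > 0" and p: "0 \<le> p" "p \<le> 1" and n: "n > 0"
    and w_meas: "\<And>i. i < n \<Longrightarrow> w i \<in> borel_measurable PP"
    and w01: "\<And>i z. i < n \<Longrightarrow> z \<in> space PP \<Longrightarrow> 0 \<le> w i z \<and> w i z \<le> 1"
    and w_int: "\<And>i. i < n \<Longrightarrow> (\<integral>z. w i z \<partial>PP) = p"
  shows "(\<integral>\<^sup>+ D. ennreal (exp (real n * DC C ((1 / real n) * (\<Sum>i<n. w i (D i))) p))
            \<partial>(\<Pi>\<^sub>M i\<in>{..<n}. PP)) \<le> 1"
    and "(\<And>i z. i < n \<Longrightarrow> z \<in> space PP \<Longrightarrow> w i z = 0 \<or> w i z = 1) \<Longrightarrow>
         (\<integral>\<^sup>+ D. ennreal (exp (real n * DC C ((1 / real n) * (\<Sum>i<n. w i (D i))) p))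
            \<partial>(\<Pi>\<^sub>M i\<in>{..<n}. PP)) = 1"
proof -
  define c where "c = 1 - exp (- C)"
  define a where "a = 1 - c * p"
  have c01: "0 < c" "c < 1" using C by (auto simp: c_def)
  have a_pos: "a > 0"
  proof -
    have "c * p \<le> c" by (rule mult_left_le) (use c01 p in auto)
    then show ?thesis using c01 unfolding a_def by linarith
  qed
  have fin: "ennreal (1 / a ^ n) * (\<Prod>i<n. ennreal a) = 1"
  proof -
    have "ennreal (1 / a ^ n) * (\<Prod>i<n. ennreal a) = ennreal (1 / a ^ n) * ennreal (a ^ n)"
      using a_pos by (simp add: ennreal_power)
    also have "\<dots> = ennreal (1 / a ^ n * a ^ n)" using a_pos by (intro ennreal_mult[symmetric]) auto
    also have "\<dots> = 1" using a_pos by simp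
    finally show ?thesis .
  qed
  have fb: "(\<integral>\<^sup>+ z. ennreal (exp (- C * w i z)) \<partial>PP) \<le> ennreal a" if "i < n" for i
    using factor_bound(1)[OF PP w_meas[OF that] w01[OF that], of C] w_int[OF that]
    unfolding a_def c_def by simp
  have K: "(\<integral>\<^sup>+ D. ennreal (exp (real n * DC C ((1 / real n) * (\<Sum>i<n. w i (D i))) p))
            \<partial>(\<Pi>\<^sub>M i\<in>{..<n}. PP)) = ennreal (1 / a ^ n) * (\<Prod>i<n. \<integral>\<^sup>+ z. ennreal (exp (- C * w i z)) \<partial>PP)"
    unfolding a_def c_def by (rule key_eq[OF PP C p n w_meas])
  have "ennreal (1 / a ^ n) * (\<Prod>i<n. \<integral>\<^sup>+ z. ennreal (exp (- C * w i z)) \<partial>PP)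
      \<le> ennreal (1 / a ^ n) * (\<Prod>i<n. ennreal a)"
    apply (rule mult_left_mono)
     apply (rule prod_mono_ennreal)
    using fb by auto
  then show "(\<integral>\<^sup>+ D. ennreal (exp (real n * DC C ((1 / real n) * (\<Sum>i<n. w i (D i))) p))
            \<partial>(\<Pi>\<^sub>M i\<in>{..<n}. PP)) \<le> 1"
    unfolding K fin .
  assume b: "\<And>i z. i < n \<Longrightarrow> z \<in> space PP \<Longrightarrow> w i z = 0 \<or> w i z = 1"
  have fe: "(\<integral>\<^sup>+ z. ennreal (exp (- C * w i z)) \<partial>PP) = ennreal a" if "i < n" for i
    using factor_bound(2)[OF PP w_meas[OF that] w01[OF that], of C] w_int[OF that] b[OF that]
    unfolding a_def c_def by simp
  show "(\<integral>\<^sup>+ D. ennreal (exp (real n * DC C ((1 / real n) * (\<Sum>i<n. w i (D i))) p))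
            \<partial>(\<Pi>\<^sub>M i\<in>{..<n}. PP)) = 1"
    unfolding K using fe fin by simp
qed


lemma DC_meas:
  assumes mc_m: "M \<in> borel_measurable N"
  shows "(\<lambda>x. ennreal (exp (real n * DC C (M x) p))) \<in> borel_measurable N"
proof -
  have g: "(\<lambda>q. ennreal (exp (real n * DC C q p))) \<in> borel_measurable borel"
  proof -
    have "continuous_on UNIV (\<lambda>q. exp (real n * DC C q p))"
      unfolding DC_def by (intro continuous_intros)
    then have "(\<lambda>q. exp (real n * DC C q p)) \<in> borel_measurable borel"
      by (rule borel_measurable_continuous_onI)
    then show ?thesis by (rule measurable_compose[OF _ measurable_ennreal])
  qed
  show ?thesis by (rule measurable_compose[OF mc_m g])
qed

lemma final_step:
  fixes X1 X2 X3 :: "'f \<Rightarrow> ennreal"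
  assumes P: "prob_space P"
    and h: "\<And>f. f \<in> space P \<Longrightarrow> X1 f \<le> 1 \<and> X2 f = 1 \<and> X3 f \<le> 1"
  shows "(\<integral>\<^sup>+ f. X1 f \<partial>P) \<le> (\<integral>\<^sup>+ f. X2 f \<partial>P) \<and> (\<integral>\<^sup>+ f. X2 f \<partial>P) = 1
    \<and> (\<integral>\<^sup>+ f. X3 f \<partial>P) \<le> (\<integral>\<^sup>+ f. X2 f \<partial>P)"
proof -
  have one: "(\<integral>\<^sup>+ f. 1 \<partial>P) = 1" using P by (simp add: prob_space.emeasure_space_1)
  have e2: "(\<integral>\<^sup>+ f. X2 f \<partial>P) = 1"
    using nn_integral_cong[of P X2 "\<lambda>_. 1"] h one by simp
  have e1: "(\<integral>\<^sup>+ f. X1 f \<partial>P) \<le> 1"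
    using nn_integral_mono[of P X1 "\<lambda>_. 1"] h one by simp
  have e3: "(\<integral>\<^sup>+ f. X3 f \<partial>P) \<le> 1"
    using nn_integral_mono[of P X3 "\<lambda>_. 1"] h one by simp
  show ?thesis using e1 e2 e3 by simp
qed

lemma loss_meas:
  assumes "F \<in> measurable M (count_space UNIV)" "Y \<in> measurable M (count_space UNIV)"
  shows "(\<lambda>x. loss01 (F x) (Y x)) \<in> borel_measurable M"
proof -
  have eq: "(\<lambda>x. loss01 (F x) (Y x)) = (\<lambda>(a,b). loss01 a b) \<circ> (\<lambda>x. (F x, Y x))"
    by (rule ext) simp
  have pm: "(\<lambda>x. (F x, Y x)) \<in> measurable M (count_space UNIV \<Otimes>\<^sub>M count_space UNIV)"
    using assms by (rule measurable_Pair)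
  have lm: "(\<lambda>(a::bool,b::bool). loss01 a b) \<in> borel_measurable (count_space UNIV \<Otimes>\<^sub>M count_space UNIV)"
    unfolding pair_measure_countable[of "UNIV::bool set" "UNIV::bool set", simplified] by simp
  show ?thesis unfolding eq by (rule measurable_comp[OF pm lm])
qed

lemma loss01_bounds: "0 \<le> loss01 a b" "loss01 a b \<le> 1" "loss01 a b = 0 \<or> loss01 a b = 1"
  by (auto simp: loss01_def)


locale aug_setting =
  fixes lam :: "'g measure" and MX :: "'x measure" and act :: "'g \<Rightarrow> 'x \<Rightarrow> 'x"
    and PP :: "('x \<times> bool) measure" and f :: "'x \<Rightarrow> bool" and C :: real and n m :: nat
  assumes lamP: "prob_space lam"
    and act_meas: "(\<lambda>(g, x). act g x) \<in> measurable (lam \<Otimes>\<^sub>M MX) MX"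
    and PP_prob: "prob_space PP"
    and PP_sets: "sets PP = sets (MX \<Otimes>\<^sub>M count_space UNIV)"
    and PP_inv: "\<forall>g\<in>space lam. distr PP PP (\<lambda>(x, y). (act g x, y)) = PP"
    and f_m: "f \<in> measurable MX (count_space UNIV)"
    and C_pos: "C > 0" and n_pos: "n > 0" and m_pos: "m > 0"
begin

sublocale PL: pair_prob_space PP lam
  by (simp add: pair_prob_space_def pair_sigma_finite_def PP_prob lamP prob_space_imp_sigma_finite)

lemma fst_m: "fst \<in> measurable PP MX"
  by (subst measurable_cong_sets[OF PP_sets refl]) (rule measurable_fst)

lemma snd_m: "snd \<in> measurable PP (count_space UNIV)"
  by (subst measurable_cong_sets[OF PP_sets refl]) (rule measurable_snd)

lemma act_g: "g \<in> space lam \<Longrightarrow> act g \<in> measurable MX MX"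
  using measurable_Pair2[OF act_meas, of g] by simp

lemma h_m:
  assumes that: "g \<in> space lam"
  shows "(\<lambda>(x, y). (act g x, y)) \<in> measurable PP PP"
proof -
  have m1: "(\<lambda>z. (act g (fst z), snd z)) \<in> measurable (MX \<Otimes>\<^sub>M count_space UNIV) (MX \<Otimes>\<^sub>M count_space UNIV)"
    by (rule measurable_Pair[OF measurable_compose[OF measurable_fst act_g[OF that]] measurable_snd])
  have m2: "(\<lambda>z. (act g (fst z), snd z)) \<in> measurable PP PP"
    unfolding measurable_cong_sets[OF PP_sets PP_sets] by (rule m1)
  have eq: "(\<lambda>(x, y). (act g x, y)) = (\<lambda>z. (act g (fst z), snd z))"
    by (rule ext) (simp split: prod.split)
  show ?thesis unfolding eq by (rule m2)
qed

lemma all_E: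
  shows "(\<integral>\<^sup>+ D. ennreal (exp (real n * DC C (aug_risk lam act n f D) (risk PP f)))
          \<partial>(\<Pi>\<^sub>M i\<in>{..<n}. PP)) \<le> 1
     \<and> (\<integral>\<^sup>+ D. ennreal (exp (real n * DC C (emp_risk n f D) (risk PP f)))
          \<partial>(\<Pi>\<^sub>M i\<in>{..<n}. PP)) = 1
     \<and> (\<integral>\<^sup>+ DG. ennreal (exp (real n * DC C (mc_aug_risk act n m f (fst DG) (snd DG)) (risk PP f)))
          \<partial>((\<Pi>\<^sub>M i\<in>{..<n}. PP) \<Otimes>\<^sub>M (\<Pi>\<^sub>M ij\<in>{..<n} \<times> {..<m}. lam))) \<le> 1"
proof -
  define l where "l = (\<lambda>z. loss01 (f (fst z)) (snd z))"
  have l_m: "l \<in> borel_measurable PP"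
    unfolding l_def by (rule loss_meas[OF measurable_compose[OF fst_m f_m] snd_m])
  have intl: "integrable PP l"
    by (rule PL.M1.integrable_const_bound[where B=1]) (use l_m in \<open>auto simp: l_def loss01_bounds\<close>)
  define p where "p = risk PP f"
  have p_def': "p = integral\<^sup>L PP l" unfolding p_def risk_def l_def ..
  have p0: "0 \<le> p" unfolding p_def' by (rule integral_nonneg_AE) (auto simp: l_def loss01_bounds)
  have p1: "p \<le> 1"
  proof -
    have "p \<le> integral\<^sup>L PP (\<lambda>_. 1::real)" unfolding p_def'
      by (rule integral_mono[OF intl]) (auto simp: l_def loss01_bounds)
    then show ?thesis by (simp add: PL.M1.prob_space)
  qed
  have inv: "(\<integral>z. loss01 (f (act g (fst z))) (snd z) \<partial>PP) = p" if "g \<in> space lam" for g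
  proof -
    have "p = integral\<^sup>L (distr PP PP (\<lambda>(x, y). (act g x, y))) l"
      using PP_inv that p_def' by simp
    also have "\<dots> = (\<integral>z. l ((\<lambda>(x, y). (act g x, y)) z) \<partial>PP)"
      by (rule integral_distr[OF h_m[OF that] l_m])
    finally show ?thesis by (simp add: l_def case_prod_beta')
  qed
  have E1: "(\<integral>\<^sup>+ D. ennreal (exp (real n * DC C (emp_risk n f D) (risk PP f)))
        \<partial>(\<Pi>\<^sub>M i\<in>{..<n}. PP)) = 1"
  proof -
    have e: "emp_risk n f D = 1 / real n * (\<Sum>i<n. l (D i))" for D
      unfolding emp_risk_def l_def ..
    show ?thesis unfolding e p_def[symmetric]
      by (rule key_le(2)[OF PP_prob C_pos p0 p1 n_pos, of "\<lambda>i. l"])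
         (use l_m intl p_def' in \<open>auto simp: l_def loss01_bounds\<close>)
  qed
  define F where "F = (\<lambda>z g. loss01 (f (act g (fst z))) (snd z))"
  have pm: "(\<lambda>zg. (snd zg, fst (fst zg))) \<in> measurable (PP \<Otimes>\<^sub>M lam) (lam \<Otimes>\<^sub>M MX)"
    by (rule measurable_Pair[OF measurable_snd measurable_compose[OF measurable_fst fst_m]])
  have am: "(\<lambda>zg. act (snd zg) (fst (fst zg))) \<in> measurable (PP \<Otimes>\<^sub>M lam) MX"
    using measurable_compose[OF pm act_meas] by simp
  have F_m: "case_prod F \<in> borel_measurable (PP \<Otimes>\<^sub>M lam)"
  proof -
    have "(\<lambda>zg. loss01 (f (act (snd zg) (fst (fst zg)))) (snd (fst zg))) \<in> borel_measurable (PP \<Otimes>\<^sub>M lam)"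
      by (rule loss_meas[OF measurable_compose[OF am f_m] measurable_compose[OF measurable_fst snd_m]])
    then show ?thesis by (simp add: F_def case_prod_beta')
  qed
  define q where "q = (\<lambda>z. \<integral>g. F z g \<partial>lam)"
  have q_m: "q \<in> borel_measurable PP"
    unfolding q_def by (rule PL.M2.borel_measurable_lebesgue_integral[OF F_m])
  have q01: "0 \<le> q z \<and> q z \<le> 1" if z: "z \<in> space PP" for z
  proof -
    have Fz: "F z \<in> borel_measurable lam"
      using measurable_Pair2[OF F_m z] by simp
    have iF: "integrable lam (F z)"
      by (rule PL.M2.integrable_const_bound[where B=1]) (use Fz in \<open>auto simp: F_def loss01_bounds\<close>)
    have "q z \<le> integral\<^sup>L lam (\<lambda>_. 1::real)" unfolding q_def
      by (rule integral_mono[OF iF]) (auto simp: F_def loss01_bounds)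
    moreover have "0 \<le> q z" unfolding q_def
      by (rule integral_nonneg_AE) (auto simp: F_def loss01_bounds)
    ultimately show ?thesis by (simp add: PL.M2.prob_space)
  qed
  have q_int: "(\<integral>z. q z \<partial>PP) = p"
  proof -
    have iF: "integrable (PP \<Otimes>\<^sub>M lam) (case_prod F)"
      by (rule PL.P.integrable_const_bound[where B=1]) (use F_m in \<open>auto simp: F_def loss01_bounds split: prod.splits\<close>)
    have "(\<integral>z. q z \<partial>PP) = (\<integral>g. (\<integral>z. F z g \<partial>PP) \<partial>lam)"
      unfolding q_def by (rule PL.Fubini_integral[OF iF, symmetric])
    also have "\<dots> = (\<integral>g. p \<partial>lam)"
      by (rule Bochner_Integration.integral_cong[OF refl]) (use inv in \<open>auto simp: F_def\<close>)
    also have "\<dots> = p" by (simp add: PL.M2.prob_space)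
    finally show ?thesis .
  qed
  have E2: "(\<integral>\<^sup>+ D. ennreal (exp (real n * DC C (aug_risk lam act n f D) (risk PP f)))
        \<partial>(\<Pi>\<^sub>M i\<in>{..<n}. PP)) \<le> 1"
  proof -
    have e: "aug_risk lam act n f D = 1 / real n * (\<Sum>i<n. q (D i))" for D
      unfolding aug_risk_def q_def F_def ..
    show ?thesis unfolding e p_def[symmetric]
      by (rule key_le(1)[OF PP_prob C_pos p0 p1 n_pos, of "\<lambda>i. q"])
         (use q_m q01 q_int in auto)
  qed
  let ?I = "{..<n} \<times> {..<m}"
  let ?MD = "\<Pi>\<^sub>M i\<in>{..<n}. PP"
  let ?MG = "\<Pi>\<^sub>M ij\<in>?I. lam"
  have MDp: "prob_space ?MD" by (rule prob_space_PiM) (rule PP_prob)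
  have MGp: "prob_space ?MG" by (rule prob_space_PiM) (rule lamP)
  interpret PD: pair_prob_space ?MD ?MG
    by (simp add: pair_prob_space_def pair_sigma_finite_def MDp MGp prob_space_imp_sigma_finite)
  have comp_m: "(\<lambda>DG. loss01 (f (act (snd DG (i, j)) (fst (fst DG i)))) (snd (fst DG i)))
      \<in> borel_measurable (?MD \<Otimes>\<^sub>M ?MG)" if "i < n" "j < m" for i j
  proof -
    have g_m: "(\<lambda>DG. snd DG (i, j)) \<in> measurable (?MD \<Otimes>\<^sub>M ?MG) lam"
      by (rule measurable_compose[OF measurable_snd measurable_component_singleton]) (use that in auto)
    have d_m: "(\<lambda>DG. fst DG i) \<in> measurable (?MD \<Otimes>\<^sub>M ?MG) PP"
      by (rule measurable_compose[OF measurable_fst measurable_component_singleton]) (use that in auto)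
    have pm2: "(\<lambda>DG. (snd DG (i, j), fst (fst DG i))) \<in> measurable (?MD \<Otimes>\<^sub>M ?MG) (lam \<Otimes>\<^sub>M MX)"
      by (rule measurable_Pair[OF g_m measurable_compose[OF d_m fst_m]])
    have "(\<lambda>DG. act (snd DG (i, j)) (fst (fst DG i))) \<in> measurable (?MD \<Otimes>\<^sub>M ?MG) MX"
      using measurable_compose[OF pm2 act_meas] by simp
    then show ?thesis
      by (rule loss_meas[OF measurable_compose[OF _ f_m] measurable_compose[OF d_m snd_m]])
  qed
  have mc_m: "(\<lambda>DG. mc_aug_risk act n m f (fst DG) (snd DG)) \<in> borel_measurable (?MD \<Otimes>\<^sub>M ?MG)"
    unfolding mc_aug_risk_def
    by (intro borel_measurable_times borel_measurable_const borel_measurable_sum) (use comp_m in auto)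
  have H_m: "(\<lambda>DG. ennreal (exp (real n * DC C (mc_aug_risk act n m f (fst DG) (snd DG)) (risk PP f))))
      \<in> borel_measurable (?MD \<Otimes>\<^sub>M ?MG)"
    by (rule DC_meas[OF mc_m])
  have inner: "(\<integral>\<^sup>+ D. ennreal (exp (real n * DC C (mc_aug_risk act n m f D Gs) (risk PP f))) \<partial>?MD) \<le> 1"
    if Gs: "Gs \<in> space ?MG" for Gs
  proof -
    have gs: "Gs (i, j) \<in> space lam" if "i < n" "j < m" for i j
      using Gs that by (auto simp: space_PiM)
    define w where "w = (\<lambda>i z. 1 / real m * (\<Sum>j<m. loss01 (f (act (Gs (i, j)) (fst z))) (snd z)))"
    have t_m: "(\<lambda>z. loss01 (f (act (Gs (i, j)) (fst z))) (snd z)) \<in> borel_measurable PP"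
      if "i < n" "j < m" for i j
      by (rule loss_meas[OF measurable_compose[OF measurable_compose[OF fst_m act_g[OF gs[OF that]]] f_m] snd_m])
    have t_i: "integrable PP (\<lambda>z. loss01 (f (act (Gs (i, j)) (fst z))) (snd z))"
      if "i < n" "j < m" for i j
      by (rule PL.M1.integrable_const_bound[where B=1]) (use t_m[OF that] in \<open>auto simp: loss01_bounds\<close>)
    have w_m: "w i \<in> borel_measurable PP" if "i < n" for i
      unfolding w_def
      by (intro borel_measurable_times borel_measurable_const borel_measurable_sum) (use t_m that in auto)
    have w01: "0 \<le> w i z \<and> w i z \<le> 1" for i z
    proof -
      have "(\<Sum>j<m. loss01 (f (act (Gs (i, j)) (fst z))) (snd z)) \<le> (\<Sum>j<m. 1)"
        by (rule sum_mono) (simp add: loss01_bounds)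
      moreover have "0 \<le> (\<Sum>j<m. loss01 (f (act (Gs (i, j)) (fst z))) (snd z))"
        by (rule sum_nonneg) (simp add: loss01_bounds)
      ultimately show ?thesis using m_pos unfolding w_def by (auto simp: field_simps)
    qed
    have w_int: "(\<integral>z. w i z \<partial>PP) = p" if "i < n" for i
    proof -
      have "(\<integral>z. w i z \<partial>PP) = 1 / real m * (\<Sum>j<m. \<integral>z. loss01 (f (act (Gs (i, j)) (fst z))) (snd z) \<partial>PP)"
        unfolding w_def using t_i that by (simp add: integral_sum)
      also have "\<dots> = 1 / real m * (\<Sum>j<m. p)"
        using inv gs that by simp
      finally show ?thesis using m_pos by simp
    qed
    have e: "mc_aug_risk act n m f D Gs = 1 / real n * (\<Sum>i<n. w i (D i))" for D
      unfolding mc_aug_risk_def w_def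
      by (simp add: sum_distrib_left mult.assoc)
    show ?thesis unfolding e p_def[symmetric]
      by (rule key_le(1)[OF PP_prob C_pos p0 p1 n_pos, of w]) (use w_m w01 w_int in auto)
  qed
  have E3: "(\<integral>\<^sup>+ DG. ennreal (exp (real n * DC C (mc_aug_risk act n m f (fst DG) (snd DG)) (risk PP f)))
        \<partial>(?MD \<Otimes>\<^sub>M ?MG)) \<le> 1"
  proof -
    have "(\<integral>\<^sup>+ DG. ennreal (exp (real n * DC C (mc_aug_risk act n m f (fst DG) (snd DG)) (risk PP f)))
        \<partial>(?MD \<Otimes>\<^sub>M ?MG))
      = (\<integral>\<^sup>+ Gs. (\<integral>\<^sup>+ D. ennreal (exp (real n * DC C (mc_aug_risk act n m f D Gs) (risk PP f))) \<partial>?MD) \<partial>?MG)"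
      using PD.nn_integral_snd[OF H_m] by simp
    also have "\<dots> \<le> (\<integral>\<^sup>+ Gs. 1 \<partial>?MG)"
      by (rule nn_integral_mono) (rule inner)
    also have "\<dots> = 1" by (simp add: PD.M2.emeasure_space_1)
    finally show ?thesis .
  qed
  show ?thesis using E1 E2 E3 by blast
qed

end

theorem lemmaA2:
  fixes Gr :: "('g::t2_space, 'b) monoid_scheme"
    and lam :: "'g measure"
    and MX :: "'x measure"
    and act :: "'g \<Rightarrow> 'x \<Rightarrow> 'x"
    and PP :: "('x \<times> bool) measure"
    and P :: "('x \<Rightarrow> bool) measure"
    and C :: real and n m :: nat
  assumes G: "compact_group_with_haar Gr lam"
    and action: "group_action Gr (space MX) act"
    and act_meas: "(\<lambda>(g, x). act g x) \<in> measurable (lam \<Otimes>\<^sub>M MX) MX"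
    and PP_prob: "prob_space PP"
    and PP_sets: "sets PP = sets (MX \<Otimes>\<^sub>M count_space UNIV)"
    and PP_inv: "\<forall>g\<in>carrier Gr. distr PP PP (\<lambda>(x, y). (act g x, y)) = PP"
    and P_prob: "prob_space P"
    and F_meas: "\<forall>f\<in>space P. f \<in> measurable MX (count_space UNIV)"
    and C_pos: "C > 0"
    and n_pos: "n > 0" and m_pos: "m > 0"
  shows
    "(\<integral>\<^sup>+ f. (\<integral>\<^sup>+ D. ennreal (exp (real n * DC C (aug_risk lam act n f D) (risk PP f)))
          \<partial>(\<Pi>\<^sub>M i\<in>{..<n}. PP)) \<partial>P)
     \<le> (\<integral>\<^sup>+ f. (\<integral>\<^sup>+ D. ennreal (exp (real n * DC C (emp_risk n f D) (risk PP f)))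
          \<partial>(\<Pi>\<^sub>M i\<in>{..<n}. PP)) \<partial>P)
   \<and> (\<integral>\<^sup>+ f. (\<integral>\<^sup>+ D. ennreal (exp (real n * DC C (emp_risk n f D) (risk PP f)))
          \<partial>(\<Pi>\<^sub>M i\<in>{..<n}. PP)) \<partial>P) = 1
   \<and> (\<integral>\<^sup>+ f. (\<integral>\<^sup>+ DG. ennreal (exp (real n * DC C (mc_aug_risk act n m f (fst DG) (snd DG)) (risk PP f)))
          \<partial>((\<Pi>\<^sub>M i\<in>{..<n}. PP) \<Otimes>\<^sub>M (\<Pi>\<^sub>M ij\<in>{..<n} \<times> {..<m}. lam))) \<partial>P)
     \<le> (\<integral>\<^sup>+ f. (\<integral>\<^sup>+ D. ennreal (exp (real n * DC C (emp_risk n f D) (risk PP f)))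
          \<partial>(\<Pi>\<^sub>M i\<in>{..<n}. PP)) \<partial>P)"
proof -
  have lamP: "prob_space lam" and sp_lam: "space lam = carrier Gr"
    using G unfolding compact_group_with_haar_def by blast+
  have per_f: "(\<integral>\<^sup>+ D. ennreal (exp (real n * DC C (aug_risk lam act n f D) (risk PP f)))
          \<partial>(\<Pi>\<^sub>M i\<in>{..<n}. PP)) \<le> 1
     \<and> (\<integral>\<^sup>+ D. ennreal (exp (real n * DC C (emp_risk n f D) (risk PP f)))
          \<partial>(\<Pi>\<^sub>M i\<in>{..<n}. PP)) = 1
     \<and> (\<integral>\<^sup>+ DG. ennreal (exp (real n * DC C (mc_aug_risk act n m f (fst DG) (snd DG)) (risk PP f)))
          \<partial>((\<Pi>\<^sub>M i\<in>{..<n}. PP) \<Otimes>\<^sub>M (\<Pi>\<^sub>M ij\<in>{..<n} \<times> {..<m}. lam))) \<le> 1"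
    if fP: "f \<in> space P" for f
  proof (rule aug_setting.all_E)
    show "aug_setting lam MX act PP f C n m"
      unfolding aug_setting_def
      using lamP act_meas PP_prob PP_sets PP_inv sp_lam F_meas fP C_pos n_pos m_pos by simp
  qed
  show ?thesis by (rule final_step[OF P_prob per_f])
qed

end
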